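(* For every $\mu > 0$ there exists $n_0$ such that for every $n \geq n_0$ the following holds. Let $G$ be an $n$-vertex graph with minimum degree $\delta(G) \geq 7\mu n$ and independence number $\alpha(G) \leq 2$. Then either $G$ is $\mu$-inseparable, or there is a $\mu$-separation $\{U_1, U_2\}$ of $V(G)$ such that $G[U_1]$ and $G[U_2]$ are both $\mu$-inseparable.
   Context: For a graph $G$, a partition $\{U_1,U_2\}$ of $V(G)$ with $U_1, U_2$ nonempty is a $\mu$-separation if the number of edges of $G$ with one endpoint in $U_1$ and the other in $U_2$ is less than $\mu |U_1||U_2|$. A graph is $\mu$-inseparable if it has no $\mu$-separation. *)

theory Defs
  imports Complex_Main
begin

definition simple_graph :: "'a set \<Rightarrow> ('a \<Rightarrow> 'a \<Rightarrow> bool) \<Rightarrow> bool" where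
  "simple_graph V E \<longleftrightarrow> finite V \<and> (\<forall>u v. E u v \<longrightarrow> u \<in> V \<and> v \<in> V)
     \<and> (\<forall>u v. E u v \<longrightarrow> E v u) \<and> (\<forall>u. \<not> E u u)"

definition degree :: "'a set \<Rightarrow> ('a \<Rightarrow> 'a \<Rightarrow> bool) \<Rightarrow> 'a \<Rightarrow> nat" where
  "degree V E v = card {u \<in> V. E v u}"

definition independent_set :: "'a set \<Rightarrow> ('a \<Rightarrow> 'a \<Rightarrow> bool) \<Rightarrow> 'a set \<Rightarrow> bool" where
  "independent_set V E S \<longleftrightarrow> S \<subseteq> V \<and> (\<forall>u\<in>S. \<forall>v\<in>S. \<not> E u v)"

definition indep_number_le :: "'a set \<Rightarrow> ('a \<Rightarrow> 'a \<Rightarrow> bool) \<Rightarrow> nat \<Rightarrow> bool" where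
  "indep_number_le V E k \<longleftrightarrow> (\<forall>S. independent_set V E S \<longrightarrow> card S \<le> k)"

definition cross_edges :: "('a \<Rightarrow> 'a \<Rightarrow> bool) \<Rightarrow> 'a set \<Rightarrow> 'a set \<Rightarrow> nat" where
  "cross_edges E U1 U2 = card {(u, v). u \<in> U1 \<and> v \<in> U2 \<and> E u v}"

definition mu_separation :: "real \<Rightarrow> 'a set \<Rightarrow> ('a \<Rightarrow> 'a \<Rightarrow> bool) \<Rightarrow> 'a set \<Rightarrow> 'a set \<Rightarrow> bool" where
  "mu_separation \<mu> V E U1 U2 \<longleftrightarrow> U1 \<noteq> {} \<and> U2 \<noteq> {} \<and> U1 \<union> U2 = V \<and> U1 \<inter> U2 = {}
     \<and> real (cross_edges E U1 U2) < \<mu> * real (card U1) * real (card U2)"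

definition mu_inseparable :: "real \<Rightarrow> 'a set \<Rightarrow> ('a \<Rightarrow> 'a \<Rightarrow> bool) \<Rightarrow> bool" where
  "mu_inseparable \<mu> V E \<longleftrightarrow> \<not> (\<exists>U1 U2. mu_separation \<mu> V E U1 U2)"

definition induced :: "('a \<Rightarrow> 'a \<Rightarrow> bool) \<Rightarrow> 'a set \<Rightarrow> 'a \<Rightarrow> 'a \<Rightarrow> bool" where
  "induced E U = (\<lambda>u v. u \<in> U \<and> v \<in> U \<and> E u v)"

end

theory Submission
  imports Defs
begin

definition dg :: "('a \<Rightarrow> 'a \<Rightarrow> bool) \<Rightarrow> 'a \<Rightarrow> 'a set \<Rightarrow> nat" where
  "dg E x Y = card {y\<in>Y. E x y}"

lemma cross_sum:
  assumes "finite X" "finite Y"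
  shows "cross_edges E X Y = (\<Sum>x\<in>X. dg E x Y)"
proof -
  have "{(u, v). u \<in> X \<and> v \<in> Y \<and> E u v} = Sigma X (\<lambda>x. {y\<in>Y. E x y})" by auto
  then show ?thesis unfolding cross_edges_def dg_def using assms by (simp add: card_SigmaI)
qed

lemma cross_sym:
  assumes "\<forall>u v. E u v \<longrightarrow> E v u"
  shows "cross_edges E X Y = cross_edges E Y X"
proof -
  have "{(u, v). u \<in> Y \<and> v \<in> X \<and> E u v} = (\<lambda>(a,b). (b,a)) ` {(u, v). u \<in> X \<and> v \<in> Y \<and> E u v}"
    using assms by auto
  moreover have "inj_on (\<lambda>(a,b). (b,a)) S" for S :: "('a \<times> 'a) set"
    by (auto simp: inj_on_def)
  ultimately show ?thesis unfolding cross_edges_def by (simp add: card_image)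
qed

lemma cross_union:
  assumes "finite X1" "finite X2" "finite Y" "X1 \<inter> X2 = {}"
  shows "cross_edges E (X1 \<union> X2) Y = cross_edges E X1 Y + cross_edges E X2 Y"
  using assms by (simp add: cross_sum sum.union_disjoint)

lemma cross_induced:
  assumes "A \<subseteq> U" "B \<subseteq> U"
  shows "cross_edges (induced E U) A B = cross_edges E A B"
proof -
  have "{(u, v). u \<in> A \<and> v \<in> B \<and> induced E U u v} = {(u, v). u \<in> A \<and> v \<in> B \<and> E u v}"
    using assms unfolding induced_def by auto
  then show ?thesis unfolding cross_edges_def by simp
qed

lemma cross_lower:
  assumes "finite X" "finite Y" "S \<subseteq> X" "T \<subseteq> Y" "\<forall>s\<in>S. \<forall>t\<in>T. E s t"
  shows "card S * card T \<le> cross_edges E X Y"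
proof -
  have "S \<times> T \<subseteq> {(u, v). u \<in> X \<and> v \<in> Y \<and> E u v}" using assms by auto
  moreover have "finite {(u, v). u \<in> X \<and> v \<in> Y \<and> E u v}"
    by (rule finite_subset[of _ "X \<times> Y"]) (use assms in auto)
  ultimately show ?thesis unfolding cross_edges_def by (metis card_cartesian_product card_mono)
qed

lemma nonnbr_clique:
  assumes "indep_number_le V E 2" "x \<in> V" "y \<in> V" "z \<in> V" "x \<noteq> y" "x \<noteq> z" "y \<noteq> z"
    "\<not> E x y" "\<not> E x z" "\<forall>u v. E u v \<longrightarrow> E v u" "\<forall>u. \<not> E u u"
  shows "E y z"
proof (rule ccontr)
  assume "\<not> E y z"
  then have "independent_set V E {x, y, z}" using assms unfolding independent_set_def by auto
  then have "card {x,y,z} \<le> 2" using assms(1) unfolding indep_number_le_def by blast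
  then show False using assms by simp
qed

lemma dg_split:
  assumes "finite V" "U1 \<union> U2 = V" "U1 \<inter> U2 = {}"
  shows "degree V E u = dg E u U1 + dg E u U2"
proof -
  have "{y\<in>V. E u y} = {y\<in>U1. E u y} \<union> {y\<in>U2. E u y}" using assms by auto
  moreover have "finite U1" "finite U2" using assms by auto
  ultimately show ?thesis unfolding degree_def dg_def using assms
    by (simp add: card_Un_disjoint disjoint_iff)
qed

lemma dg_le: "finite U \<Longrightarrow> dg E u U \<le> card U"
  unfolding dg_def by (simp add: card_mono)

lemma cross_union_r:
  assumes "finite X" "finite Y1" "finite Y2" "Y1 \<inter> Y2 = {}" "\<forall>u v. E u v \<longrightarrow> E v u"
  shows "cross_edges E X (Y1 \<union> Y2) = cross_edges E X Y1 + cross_edges E X Y2"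
  using assms cross_union[of Y1 Y2 X E] cross_sym[of E] by metis

lemma part_big:
  assumes g: "simple_graph V E" and n: "card V = n" and \<mu>: "\<mu> > 0"
    and deg: "\<forall>v\<in>V. real (degree V E v) \<ge> 7 * \<mu> * real n"
    and sep: "mu_separation \<mu> V E U1 U2"
  shows "real (card U1) > 6 * \<mu> * real n"
proof -
  have fV: "finite V" using g unfolding simple_graph_def by auto
  have s: "U1 \<noteq> {}" "U2 \<noteq> {}" "U1 \<union> U2 = V" "U1 \<inter> U2 = {}"
    "real (cross_edges E U1 U2) < \<mu> * real (card U1) * real (card U2)"
    using sep unfolding mu_separation_def by auto
  have f1: "finite U1" and f2: "finite U2" using fV s by auto
  have c1: "card U1 > 0" using f1 s by auto
  have "\<forall>u\<in>U1. real (dg E u U2) \<ge> 7 * \<mu> * real n - real (card U1)"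
  proof
    fix u assume u: "u \<in> U1"
    have "degree V E u = dg E u U1 + dg E u U2" using dg_split[OF fV s(3,4)] .
    moreover have "dg E u U1 \<le> card U1" using dg_le[OF f1] .
    moreover have "real (degree V E u) \<ge> 7 * \<mu> * real n" using deg u s by auto
    ultimately show "real (dg E u U2) \<ge> 7 * \<mu> * real n - real (card U1)" by linarith
  qed
  then have "(\<Sum>u\<in>U1. real (dg E u U2)) \<ge> (\<Sum>u\<in>U1. 7 * \<mu> * real n - real (card U1))"
    by (intro sum_mono) auto
  then have "real (cross_edges E U1 U2) \<ge> real (card U1) * (7 * \<mu> * real n - real (card U1))"
    using cross_sum[OF f1 f2, of E] by simp
  moreover have "card U2 \<le> n" using n s fV by (metis card_mono sup_ge2)
  then have "\<mu> * real (card U1) * real (card U2) \<le> \<mu> * real (card U1) * real n"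
    using \<mu> by (intro mult_left_mono) auto
  ultimately have "real (card U1) * (7 * \<mu> * real n - real (card U1)) < real (card U1) * (\<mu> * real n)"
    using s(5) by (simp add: algebra_simps)
  then have "7 * \<mu> * real n - real (card U1) < \<mu> * real n"
    using c1 by (simp add: mult_less_cancel_left)
  then show ?thesis by linarith
qed

lemma nonnbr_card:
  assumes "finite B"
  shows "card {b\<in>B. \<not> E x b} = card B - dg E x B"
proof -
  have "B = {b\<in>B. \<not> E x b} \<union> {b\<in>B. E x b}" by auto
  then have "card B = card {b\<in>B. \<not> E x b} + card {b\<in>B. E x b}"
    using assms by (metis (no_types, lifting) card_Un_disjoint disjoint_iff finite_Un mem_Collect_eq)
  then show ?thesis unfolding dg_def by simp
qed

lemma core:
  assumes g: "simple_graph V E" and ind: "indep_number_le V E 2" and n: "card V = n"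
    and \<mu>: "\<mu> > 0" "\<mu> < 1/7"
    and d: "A \<inter> B = {}" "A \<inter> U2 = {}" "B \<inter> U2 = {}" "A \<union> B \<union> U2 = V"
    and ne: "A \<noteq> {}" "B \<noteq> {}" "U2 \<noteq> {}"
    and sAB: "real (cross_edges E A B) < \<mu> * real (card A) * real (card B)"
    and sAU: "real (cross_edges E A U2) < \<mu> * real (card A) * real (card U2)"
    and bigU: "real (card U2) > 6 * \<mu> * real n"
    and minl: "cross_edges E (A \<union> B) U2 \<le> cross_edges E A (B \<union> U2)"
  shows False
proof -
  have fV: "finite V" and sym: "\<forall>u v. E u v \<longrightarrow> E v u" and irr: "\<forall>u. \<not> E u u"
    using g unfolding simple_graph_def by auto
  have fA: "finite A" and fB: "finite B" and fU: "finite U2" using fV d by auto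
  have cA: "real (card A) > 0" and cB: "real (card B) > 0" and cU: "real (card U2) > 0"
    using fA fB fU ne by auto
  have "\<exists>x\<in>A. real (dg E x B) / real (card B) + real (dg E x U2) / real (card U2) < 2 * \<mu>"
  proof (rule ccontr)
    assume "\<not> ?thesis"
    then have "(\<Sum>x\<in>A. 2 * \<mu>) \<le> (\<Sum>x\<in>A. real (dg E x B) / real (card B) + real (dg E x U2) / real (card U2))"
      by (intro sum_mono) auto
    also have "\<dots> = real (cross_edges E A B) / real (card B) + real (cross_edges E A U2) / real (card U2)"
      by (simp add: sum.distrib cross_sum[OF fA fB] cross_sum[OF fA fU] sum_divide_distrib)
    also have "\<dots> < \<mu> * real (card A) + \<mu> * real (card A)"
      using sAB sAU cB cU by (intro add_strict_mono) (simp_all add: divide_less_eq)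
    finally show False by simp
  qed
  then obtain x where x: "x \<in> A"
    and xs: "real (dg E x B) / real (card B) + real (dg E x U2) / real (card U2) < 2 * \<mu>" by blast
  have "real (dg E x B) / real (card B) < 2 * \<mu>" using xs cU by (smt (verit) divide_nonneg_nonneg of_nat_0_le_iff)
  then have xB: "real (dg E x B) < 2 * \<mu> * real (card B)" using cB by (simp add: divide_less_eq)
  have "real (dg E x U2) / real (card U2) < 2 * \<mu>" using xs cB by (smt (verit) divide_nonneg_nonneg of_nat_0_le_iff)
  then have xU: "real (dg E x U2) < 2 * \<mu> * real (card U2)" using cU by (simp add: divide_less_eq)
  define B' where "B' = {b\<in>B. \<not> E x b}"
  define U' where "U' = {b\<in>U2. \<not> E x b}"
  have "dg E x B \<le> card B" using dg_le[OF fB] .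
  then have cB': "real (card B') \<ge> (1 - 2*\<mu>) * real (card B)"
    using nonnbr_card[OF fB, of E x] xB unfolding B'_def by (simp add: of_nat_diff algebra_simps)
  have "dg E x U2 \<le> card U2" using dg_le[OF fU] .
  then have cU': "real (card U') \<ge> (1 - 2*\<mu>) * real (card U2)"
    using nonnbr_card[OF fU, of E x] xU unfolding U'_def by (simp add: of_nat_diff algebra_simps)
  have adj: "\<forall>b\<in>B'. \<forall>u\<in>U'. E b u"
  proof (intro ballI)
    fix b u assume b: "b \<in> B'" and u: "u \<in> U'"
    show "E b u"
      using nonnbr_clique[OF ind, of x b u] b u x d sym irr unfolding B'_def U'_def by blast
  qed
  have "card B' * card U' \<le> cross_edges E B U2"
    by (rule cross_lower[OF fB fU _ _ adj]) (auto simp: B'_def U'_def)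
  then have "real (cross_edges E B U2) \<ge> real (card B') * real (card U')"
    by (metis of_nat_le_iff of_nat_mult)
  moreover have "real (card B') * real (card U') \<ge> ((1 - 2*\<mu>) * real (card B)) * ((1 - 2*\<mu>) * real (card U2))"
    using cB' cU' \<mu> cB cU by (intro mult_mono) auto
  ultimately have eBU: "real (cross_edges E B U2) \<ge> (1 - 2*\<mu>)^2 * real (card B) * real (card U2)"
    by (simp add: power2_eq_square algebra_simps)
  have "cross_edges E (A \<union> B) U2 = cross_edges E A U2 + cross_edges E B U2"
    using cross_union[OF fA fB fU d(1)] .
  moreover have "cross_edges E A (B \<union> U2) = cross_edges E A B + cross_edges E A U2"
    using cross_union_r[OF fA fB fU d(3) sym] .
  ultimately have "cross_edges E B U2 \<le> cross_edges E A B" using minl by simp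
  then have le1: "(1 - 2*\<mu>)^2 * real (card B) * real (card U2) < \<mu> * real (card A) * real (card B)"
    using eBU sAB by (meson of_nat_le_iff order.trans order_le_less_trans)
  have "card A \<le> n" using n fV d by (metis card_mono sup_ge1 le_supI1)
  then have "\<mu> * real (card A) * real (card B) \<le> \<mu> * real n * real (card B)"
    using \<mu> cB by (intro mult_right_mono mult_left_mono) auto
  moreover have "(1 - 2*\<mu>)^2 \<ge> 25/49"
  proof -
    have "(5/7::real)^2 \<le> (1 - 2*\<mu>)^2" using \<mu> by (intro power_mono) auto
    then show ?thesis by (simp add: power2_eq_square)
  qed
  moreover have "(1 - 2*\<mu>)^2 * real (card U2) \<ge> (25/49) * (6 * \<mu> * real n)"
    using calculation(2) bigU \<mu> by (intro mult_mono) auto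
  ultimately have "(25/49) * (6 * \<mu> * real n) * real (card B) < \<mu> * real n * real (card B)"
  proof -
    assume a: "\<mu> * real (card A) * real (card B) \<le> \<mu> * real n * real (card B)"
      "(1 - 2*\<mu>)^2 \<ge> 25/49" "(1 - 2*\<mu>)^2 * real (card U2) \<ge> (25/49) * (6 * \<mu> * real n)"
    have "(25/49) * (6 * \<mu> * real n) * real (card B) \<le> (1 - 2*\<mu>)^2 * real (card U2) * real (card B)"
      using a(3) cB by (intro mult_right_mono) auto
    also have "\<dots> = (1 - 2*\<mu>)^2 * real (card B) * real (card U2)" by simp
    finally show ?thesis using le1 a(1) by linarith
  qed
  moreover have "\<mu> * real n * real (card B) \<ge> 0" using \<mu> by simp
  ultimately show False by linarith
qed

lemma sep_sym:
  assumes "\<forall>u v. E u v \<longrightarrow> E v u" "mu_separation \<mu> V E U1 U2"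
  shows "mu_separation \<mu> V E U2 U1"
  using assms cross_sym[of E U1 U2] unfolding mu_separation_def
  by (auto simp: Un_commute Int_commute mult.commute mult.left_commute)

lemma one_case:
  assumes g: "simple_graph V E" and ind: "indep_number_le V E 2" and n: "card V = n"
    and \<mu>: "\<mu> > 0" "\<mu> < 1/7"
    and deg: "\<forall>v\<in>V. real (degree V E v) \<ge> 7 * \<mu> * real n"
    and sep: "mu_separation \<mu> V E (A \<union> B) U2"
    and minl: "\<forall>W1 W2. mu_separation \<mu> V E W1 W2 \<longrightarrow> cross_edges E (A \<union> B) U2 \<le> cross_edges E W1 W2"
    and d: "A \<inter> B = {}" and ne: "A \<noteq> {}" "B \<noteq> {}"
    and sAB: "real (cross_edges E A B) < \<mu> * real (card A) * real (card B)"
    and sAU: "real (cross_edges E A U2) < \<mu> * real (card A) * real (card U2)"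
  shows False
proof -
  have fV: "finite V" and sym: "\<forall>u v. E u v \<longrightarrow> E v u"
    using g unfolding simple_graph_def by auto
  have s: "U2 \<noteq> {}" "A \<union> B \<union> U2 = V" "(A \<union> B) \<inter> U2 = {}"
    using sep unfolding mu_separation_def by auto
  have fA: "finite A" and fB: "finite B" and fU: "finite U2" using fV s by auto
  have bigU: "real (card U2) > 6 * \<mu> * real n"
    using part_big[OF g n \<mu>(1) deg sep_sym[OF sym sep]] .
  have dBU: "B \<inter> U2 = {}" using s by auto
  have cs: "cross_edges E A (B \<union> U2) = cross_edges E A B + cross_edges E A U2"
    using cross_union_r[OF fA fB fU dBU sym] .
  have cc: "card (B \<union> U2) = card B + card U2" using fB fU dBU by (simp add: card_Un_disjoint)
  have "mu_separation \<mu> V E A (B \<union> U2)"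
    unfolding mu_separation_def
  proof (intro conjI)
    show "real (cross_edges E A (B \<union> U2)) < \<mu> * real (card A) * real (card (B \<union> U2))"
      using cs cc sAB sAU by (simp add: algebra_simps)
  qed (use ne s d in auto)
  then have "cross_edges E (A \<union> B) U2 \<le> cross_edges E A (B \<union> U2)" using minl by blast
  then show False
    using core[OF g ind n \<mu> d, of U2] s ne sAB sAU bigU by auto
qed

lemma one_side:
  assumes g: "simple_graph V E" and ind: "indep_number_le V E 2" and n: "card V = n"
    and \<mu>: "\<mu> > 0" "\<mu> < 1/7"
    and deg: "\<forall>v\<in>V. real (degree V E v) \<ge> 7 * \<mu> * real n"
    and sep: "mu_separation \<mu> V E U1 U2"
    and minl: "\<forall>W1 W2. mu_separation \<mu> V E W1 W2 \<longrightarrow> cross_edges E U1 U2 \<le> cross_edges E W1 W2"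
  shows "mu_inseparable \<mu> U1 (induced E U1)"
  unfolding mu_inseparable_def
proof
  assume "\<exists>A B. mu_separation \<mu> U1 (induced E U1) A B"
  then obtain A B where ab: "mu_separation \<mu> U1 (induced E U1) A B" by blast
  have fV: "finite V" and sym: "\<forall>u v. E u v \<longrightarrow> E v u"
    using g unfolding simple_graph_def by auto
  have s: "U1 \<noteq> {}" "U2 \<noteq> {}" "U1 \<union> U2 = V" "U1 \<inter> U2 = {}"
    "real (cross_edges E U1 U2) < \<mu> * real (card U1) * real (card U2)"
    using sep unfolding mu_separation_def by auto
  have t: "A \<noteq> {}" "B \<noteq> {}" "A \<union> B = U1" "A \<inter> B = {}"
    "real (cross_edges (induced E U1) A B) < \<mu> * real (card A) * real (card B)"
    using ab unfolding mu_separation_def by auto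
  have fA: "finite A" and fB: "finite B" and fU: "finite U2" using fV s t by auto
  have sAB: "real (cross_edges E A B) < \<mu> * real (card A) * real (card B)"
    using t cross_induced[of A U1 B E] by auto
  have sBA: "real (cross_edges E B A) < \<mu> * real (card B) * real (card A)"
    using sAB cross_sym[OF sym, of A B] by (simp add: mult.commute mult.left_commute)
  have "cross_edges E U1 U2 = cross_edges E A U2 + cross_edges E B U2"
    using cross_union[OF fA fB fU t(4)] t(3) by simp
  moreover have "card U1 = card A + card B" using t fA fB by (metis card_Un_disjoint)
  ultimately have "real (cross_edges E A U2) + real (cross_edges E B U2)
      < \<mu> * real (card A) * real (card U2) + \<mu> * real (card B) * real (card U2)"
    using s(5) by (simp add: algebra_simps)
  then consider "real (cross_edges E A U2) < \<mu> * real (card A) * real (card U2)"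
    | "real (cross_edges E B U2) < \<mu> * real (card B) * real (card U2)" by linarith
  then show False
  proof cases
    case 1
    then show False using one_case[OF g ind n \<mu> deg, of A B U2] sep minl t sAB by auto
  next
    case 2
    have "B \<union> A = U1" "B \<inter> A = {}" using t by auto
    then show False using one_case[OF g ind n \<mu> deg, of B A U2] 2 sep minl t sBA by auto
  qed
qed

theorem lemma7p3:
  fixes \<mu> :: real
  assumes "\<mu> > 0"
  shows "\<exists>n0::nat. \<forall>n\<ge>n0. \<forall>(V::nat set) E.
    simple_graph V E \<and> card V = n \<and>
    (\<forall>v\<in>V. real (degree V E v) \<ge> 7 * \<mu> * real n) \<and>
    indep_number_le V E 2 \<longrightarrow>
      mu_inseparable \<mu> V E \<or>
      (\<exists>U1 U2. mu_separation \<mu> V E U1 U2 \<and>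
         mu_inseparable \<mu> U1 (induced E U1) \<and> mu_inseparable \<mu> U2 (induced E U2))"
proof (intro exI[of _ 0] allI impI)
  fix n :: nat and V :: "nat set" and E
  assume h: "simple_graph V E \<and> card V = n \<and>
    (\<forall>v\<in>V. real (degree V E v) \<ge> 7 * \<mu> * real n) \<and> indep_number_le V E 2"
  then have g: "simple_graph V E" and n: "card V = n"
    and deg: "\<forall>v\<in>V. real (degree V E v) \<ge> 7 * \<mu> * real n" and ind: "indep_number_le V E 2"
    by auto
  have fV: "finite V" and sym: "\<forall>u v. E u v \<longrightarrow> E v u" and irr: "\<forall>u. \<not> E u u"
    using g unfolding simple_graph_def by auto
  show "mu_inseparable \<mu> V E \<or>
      (\<exists>U1 U2. mu_separation \<mu> V E U1 U2 \<and>
         mu_inseparable \<mu> U1 (induced E U1) \<and> mu_inseparable \<mu> U2 (induced E U2))"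
  proof (cases "mu_inseparable \<mu> V E")
    case True then show ?thesis by simp
  next
    case False
    then obtain W1 W2 where "mu_separation \<mu> V E W1 W2" unfolding mu_inseparable_def by blast
    then have "(\<lambda>p. mu_separation \<mu> V E (fst p) (snd p)) (W1, W2)" by simp
    from ex_has_least_nat[where P="\<lambda>p. mu_separation \<mu> V E (fst p) (snd p)" and m="\<lambda>p. cross_edges E (fst p) (snd p)", OF this]
    obtain p where p: "mu_separation \<mu> V E (fst p) (snd p)"
      and pm: "\<forall>q. mu_separation \<mu> V E (fst q) (snd q) \<longrightarrow> cross_edges E (fst p) (snd p) \<le> cross_edges E (fst q) (snd q)"
      by blast
    define U1 where "U1 = fst p"
    define U2 where "U2 = snd p"
    have sep: "mu_separation \<mu> V E U1 U2" using p unfolding U1_def U2_def .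
    have minl: "\<forall>W1 W2. mu_separation \<mu> V E W1 W2 \<longrightarrow> cross_edges E U1 U2 \<le> cross_edges E W1 W2"
    proof (intro allI impI)
      fix W1 W2 assume "mu_separation \<mu> V E W1 W2"
      then show "cross_edges E U1 U2 \<le> cross_edges E W1 W2"
        using pm[rule_format, of "(W1, W2)"] unfolding U1_def U2_def by simp
    qed
    have "V \<noteq> {}" using sep unfolding mu_separation_def by auto
    then obtain v where v: "v \<in> V" by blast
    have "{u\<in>V. E v u} \<subseteq> V - {v}" using irr by auto
    then have "degree V E v \<le> card (V - {v})" unfolding degree_def using fV by (simp add: card_mono)
    moreover have "card (V - {v}) = n - 1" using v fV n by simp
    moreover have npos: "n > 0" using v fV n card_gt_0_iff by blast
    ultimately have "degree V E v < n" by linarith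
    then have "real (degree V E v) < real n" by simp
    moreover have "7 * \<mu> * real n \<le> real (degree V E v)" using deg v by blast
    ultimately have "(7 * \<mu>) * real n < 1 * real n" by linarith
    then have "7 * \<mu> < 1" using npos by (simp add: mult_less_cancel_right)
    then have \<mu>7: "\<mu> < 1/7" by simp
    have i1: "mu_inseparable \<mu> U1 (induced E U1)"
      using one_side[OF g ind n assms \<mu>7 deg sep minl] .
    have minl2: "\<forall>W1 W2. mu_separation \<mu> V E W1 W2 \<longrightarrow> cross_edges E U2 U1 \<le> cross_edges E W1 W2"
      using minl cross_sym[OF sym, of U1 U2] by simp
    have i2: "mu_inseparable \<mu> U2 (induced E U2)"
      using one_side[OF g ind n assms \<mu>7 deg sep_sym[OF sym sep] minl2] .
    show ?thesis using sep i1 i2 by blast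
  qed
qed

end
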